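(* Let $(X,d_X)$ be a complete metric space and let $\{E_t\}_{t\in\mathbb{R}}$ be a locally uniformly compact family of nonempty compact subsets of $X$. Then there exists a nonempty compact set $E\subset X$ with $\lim_{t\to\infty}\operatorname{dist}(E_t,E)=0$ if and only if $\{E_t\}_{t\in\mathbb{R}}$ is forward compact, i.e. there is a compact set $K\subset X$ with $\bigcup_{t\geq0}E_t\subset K$.
   Context: A family $\{E_t\}_{t\in\mathbb{R}}$ of nonempty compact sets is locally uniformly compact if for every bounded interval $I\subset\mathbb{R}$ the union $\bigcup_{t\in I}E_t$ is precompact. $\operatorname{dist}(A,B)=\sup_{a\in A}\inf_{b\in B}d_X(a,b)$ is the Hausdorff semi-metric. *)

theory Defs
  imports "HOL-Analysis.Analysis"
begin

definition hsemidist :: "'a::metric_space set \<Rightarrow> 'a set \<Rightarrow> real" where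
  "hsemidist A B = (SUP a\<in>A. infdist a B)"

definition precompact :: "'a::metric_space set \<Rightarrow> bool" where
  "precompact S \<longleftrightarrow> compact (closure S)"

definition locally_uniformly_compact :: "(real \<Rightarrow> 'a::metric_space set) \<Rightarrow> bool" where
  "locally_uniformly_compact E \<longleftrightarrow>
     (\<forall>I. bounded I \<longrightarrow> precompact (\<Union>t\<in>I. E t))"

definition forward_compact :: "(real \<Rightarrow> 'a::metric_space set) \<Rightarrow> bool" where
  "forward_compact E \<longleftrightarrow> (\<exists>K. compact K \<and> (\<Union>t\<in>{0..}. E t) \<subseteq> K)"

end

theory Submission
  imports Defs
begin

lemma infdist_lessE:
  assumes "A \<noteq> {}" "infdist x A < e"
  shows "\<exists>a\<in>A. dist x a < e"
proof -
  have "bdd_below ((\<lambda>a. dist x a) ` A)"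
    by (rule bdd_belowI[of _ 0]) auto
  then show ?thesis using assms by (simp add: infdist_notempty cINF_less_iff)
qed

lemma infdist_le_hsemidist:
  assumes "compact S" "a \<in> S"
  shows "infdist a C \<le> hsemidist S C"
proof -
  have "compact ((\<lambda>x. infdist x C) ` S)"
    by (rule compact_continuous_image[OF _ assms(1)])
       (intro continuous_on_infdist continuous_on_id)
  then have "bdd_above ((\<lambda>x. infdist x C) ` S)"
    by (intro bounded_imp_bdd_above compact_imp_bounded)
  then show ?thesis unfolding hsemidist_def using assms(2) by (rule cSUP_upper2) simp
qed

theorem proposition3p2:
  fixes E :: "real \<Rightarrow> 'a::complete_space set"
  assumes "\<And>t. compact (E t)" and "\<And>t. E t \<noteq> {}"
    and "locally_uniformly_compact E"
  shows "(\<exists>C. compact C \<and> C \<noteq> {} \<and> ((\<lambda>t. hsemidist (E t) C) \<longlongrightarrow> 0) at_top)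
         \<longleftrightarrow> forward_compact E"
proof
  assume "\<exists>C. compact C \<and> C \<noteq> {} \<and> ((\<lambda>t. hsemidist (E t) C) \<longlongrightarrow> 0) at_top"
  then obtain C where C: "compact C" "C \<noteq> {}" and lim: "((\<lambda>t. hsemidist (E t) C) \<longlongrightarrow> 0) at_top"
    by blast
  define U where "U = (\<Union>t\<in>{0..}. E t)"
  have tb: "\<exists>k. finite k \<and> U \<subseteq> (\<Union>x\<in>k. ball x e)" if e: "e > 0" for e
  proof -
    have "\<forall>\<^sub>F t in at_top. dist (hsemidist (E t) C) 0 < e/2"
      using lim e unfolding tendsto_iff by (meson half_gt_zero)
    then obtain T where T: "\<And>t. t \<ge> T \<Longrightarrow> \<bar>hsemidist (E t) C\<bar> < e/2"
      unfolding eventually_at_top_linorder by auto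
    have "seq_compact C" using C(1) compact_imp_seq_compact by blast
    from seq_compact_imp_totally_bounded[OF this] e obtain k1 where
      k1: "finite k1" "C \<subseteq> (\<Union>x\<in>k1. ball x (e/2))" by (meson half_gt_zero)
    have "bounded {0..T}" by simp
    then have "compact (closure (\<Union>t\<in>{0..T}. E t))"
      using assms(3) unfolding locally_uniformly_compact_def precompact_def by blast
    then have "seq_compact (closure (\<Union>t\<in>{0..T}. E t))" using compact_imp_seq_compact by blast
    from seq_compact_imp_totally_bounded[OF this] e obtain k2 where
      k2: "finite k2" "closure (\<Union>t\<in>{0..T}. E t) \<subseteq> (\<Union>x\<in>k2. ball x e)" by meson
    have "U \<subseteq> (\<Union>x\<in>k1 \<union> k2. ball x e)"
    proof
      fix a assume "a \<in> U"
      then obtain t where t: "t \<ge> 0" "a \<in> E t" unfolding U_def by auto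
      show "a \<in> (\<Union>x\<in>k1 \<union> k2. ball x e)"
      proof (cases "t \<le> T")
        case True
        then have "a \<in> closure (\<Union>t\<in>{0..T}. E t)" using t closure_subset by fastforce
        then show ?thesis using k2 by blast
      next
        case False
        have "infdist a C \<le> hsemidist (E t) C" by (rule infdist_le_hsemidist[OF assms(1) t(2)])
        also have "\<dots> < e/2" using T[of t] False by simp
        finally obtain c where c: "c \<in> C" "dist a c < e/2" using infdist_lessE[OF C(2)] by blast
        then obtain x where x: "x \<in> k1" "dist x c < e/2" using k1 by auto
        have "dist x a \<le> dist x c + dist a c" using dist_triangle[of x a c] by (simp add: dist_commute)
        then have "dist x a < e" using c x by simp
        then show ?thesis using x by auto
      qed
    qed
    then show ?thesis using k1 k2 by blast
  qed
  have "compact (closure U)"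
    unfolding compact_eq_totally_bounded
  proof
    show "complete (closure U)" by (simp add: complete_eq_closed)
    show "\<forall>e>0. \<exists>k. finite k \<and> closure U \<subseteq> (\<Union>x\<in>k. ball x e)"
    proof (intro allI impI)
      fix e :: real assume "e > 0"
      then obtain k where k: "finite k" "U \<subseteq> (\<Union>x\<in>k. ball x (e/2))" using tb[of "e/2"] by auto
      have "U \<subseteq> (\<Union>x\<in>k. cball x (e/2))" using k(2) ball_subset_cball by (meson SUP_mono' order_trans)
      then have "closure U \<subseteq> (\<Union>x\<in>k. cball x (e/2))"
        by (intro closure_minimal) (auto intro!: closed_UN k(1))
      also have "\<dots> \<subseteq> (\<Union>x\<in>k. ball x e)"
      proof (rule SUP_mono')
        fix x show "cball x (e/2) \<subseteq> ball x e" using \<open>e > 0\<close> by (simp add: subset_eq)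
      qed
      finally show "\<exists>k. finite k \<and> closure U \<subseteq> (\<Union>x\<in>k. ball x e)" using k(1) by blast
    qed
  qed
  then show "forward_compact E" unfolding forward_compact_def
    using closure_subset[of U] unfolding U_def by blast
next
  assume "forward_compact E"
  then obtain K where K: "compact K" "(\<Union>t\<in>{0..}. E t) \<subseteq> K"
    unfolding forward_compact_def by blast
  have "K \<noteq> {}" using K(2) assms(2)[of 0] by auto
  moreover have "((\<lambda>t. hsemidist (E t) K) \<longlongrightarrow> 0) at_top"
  proof (rule tendsto_eventually)
    show "\<forall>\<^sub>F t in at_top. hsemidist (E t) K = 0"
      unfolding eventually_at_top_linorder
    proof (intro exI allI impI)
      fix t :: real assume "t \<ge> 0"
      then have "E t \<subseteq> K" using K(2) by auto
      then have "(\<lambda>a. infdist a K) ` E t = {0}" using assms(2)[of t] by (auto simp: image_iff subset_eq)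
      then show "hsemidist (E t) K = 0" unfolding hsemidist_def by simp
    qed
  qed
  ultimately show "\<exists>C. compact C \<and> C \<noteq> {} \<and> ((\<lambda>t. hsemidist (E t) C) \<longlongrightarrow> 0) at_top"
    using K(1) by blast
qed

end
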